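(* Let $(e_i)$ denote the canonical basis of $\ell_1$, and for $n\in\mathbb{N}$ let $x_n=e_n-\tfrac12(e_{2n+1}+e_{2n+2})$. For each $n$, let $x^{(n)}_1,\dots,x^{(n)}_n$ be the copies of $x_1,\dots,x_n$ (which lie in $\ell_1^{2n+2}$) inside the $n$-th summand of the Banach lattice $Y=\big(\sum_{n}\ell_1^{2n+2}\big)_{\ell_1}$ (with its coordinatewise order). Then the sequence $\big(x^{(n)}_i\big)_{1\le i\le n,\,n\in\mathbb{N}}$, ordered by $n$ first and then by $i$, is neither uniformly quasi-greedy nor bibasic in $Y$.
   Context: A sequence $(x_k)$ of nonzero vectors in a Banach lattice is bibasic if there is $M\ge1$ with $\|\bigvee_{n=1}^m|\sum_{k=1}^na_kx_k|\|\le M\|\sum_{k=1}^ma_kx_k\|$ for all $m$ and scalars $a_k$. A semi-normalized basic sequence $(x_k)$ with span $E$ and biorthogonal functionals $x_k^*$ is uniformly quasi-greedy if $\sup_m\sup_{x\in E,\|x\|=1}\|\bigvee_{n=1}^m|\mathcal{G}_n(x)|\|<\infty$, where $\mathcal{G}_n(x)=\sum_{j=1}^n x^*_{\rho(j)}(x)x_{\rho(j)}$ and $\rho$ is the natural greedy ordering of $x$ (indices listed by non-increasing $|x_k^*(x)|$, ties broken by increasing index). (The sequence $(x^{(n)}_i)$ is known to be a semi-normalized quasi-greedy basic sequence in $Y$.) *)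

theory Defs
  imports "HOL-Analysis.Analysis"
begin

text \<open>The Banach lattice Y = (sum_n l1^{2n+2})_{l1} is realised as l1 over the
index set of pairs (n, j) (summand n, coordinate j), with coordinatewise order:
lattice operations are pointwise, |f| is pointwise absolute value.\<close>

definition l1space :: "('i \<Rightarrow> real) set" where
  "l1space = {f. (\<lambda>t. \<bar>f t\<bar>) summable_on UNIV}"

definition l1norm :: "('i \<Rightarrow> real) \<Rightarrow> real" where
  "l1norm f = (\<Sum>\<^sub>\<infinity>t. \<bar>f t\<bar>)"

text \<open>Sequences are indexed from 1 (index 0 is ignored).\<close>

definition l1_bibasic :: "(nat \<Rightarrow> 'i \<Rightarrow> real) \<Rightarrow> bool" where
  "l1_bibasic x \<longleftrightarrow> (\<exists>M\<ge>1. \<forall>m\<ge>1. \<forall>a::nat \<Rightarrow> real.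
     l1norm (\<lambda>t. Max ((\<lambda>n. \<bar>\<Sum>k\<in>{1..n}. a k * x k t\<bar>) ` {1..m}))
       \<le> M * l1norm (\<lambda>t. \<Sum>k\<in>{1..m}. a k * x k t))"

definition l1_span :: "(nat \<Rightarrow> 'i \<Rightarrow> real) \<Rightarrow> ('i \<Rightarrow> real) set" where
  "l1_span x = {f. \<exists>n (a::nat \<Rightarrow> real). f = (\<lambda>t. \<Sum>k\<in>{1..n}. a k * x k t)}"

definition l1_closed_span :: "(nat \<Rightarrow> 'i \<Rightarrow> real) \<Rightarrow> ('i \<Rightarrow> real) set" where
  "l1_closed_span x = {f \<in> l1space. \<forall>\<epsilon>>0. \<exists>g\<in>l1_span x. l1norm (\<lambda>t. f t - g t) < \<epsilon>}"

text \<open>Biorthogonal functionals of a basic sequence: coefficients of the (unique)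
norm-convergent expansion y = sum_k x_k^*(y) x_k.\<close>
definition l1_coeffs :: "(nat \<Rightarrow> 'i \<Rightarrow> real) \<Rightarrow> ('i \<Rightarrow> real) \<Rightarrow> nat \<Rightarrow> real" where
  "l1_coeffs x y = (THE a. a 0 = 0 \<and>
     (\<lambda>m. l1norm (\<lambda>t. y t - (\<Sum>k\<in>{1..m}. a k * x k t))) \<longlonglongrightarrow> 0)"

text \<open>Indices preceding k in the natural greedy ordering of coefficient sequence c
(non-increasing |c_k|, ties broken by increasing index).\<close>
definition greedy_pred :: "(nat \<Rightarrow> real) \<Rightarrow> nat \<Rightarrow> nat set" where
  "greedy_pred c k = {j. 1 \<le> j \<and> (\<bar>c j\<bar> > \<bar>c k\<bar> \<or> (\<bar>c j\<bar> = \<bar>c k\<bar> \<and> j < k))}"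

text \<open>The set {rho(1),...,rho(n)} of the first n indices in the greedy ordering
(indices with zero coefficient that are never reached are irrelevant for G_n).\<close>
definition greedy_set :: "(nat \<Rightarrow> real) \<Rightarrow> nat \<Rightarrow> nat set" where
  "greedy_set c n = {k. 1 \<le> k \<and> finite (greedy_pred c k) \<and> card (greedy_pred c k) < n}"

definition greedy_sum :: "(nat \<Rightarrow> 'i \<Rightarrow> real) \<Rightarrow> ('i \<Rightarrow> real) \<Rightarrow> nat \<Rightarrow> 'i \<Rightarrow> real" where
  "greedy_sum x y n = (\<lambda>t. \<Sum>k\<in>greedy_set (l1_coeffs x y) n. l1_coeffs x y k * x k t)"

definition l1_uniformly_quasi_greedy :: "(nat \<Rightarrow> 'i \<Rightarrow> real) \<Rightarrow> bool" where
  "l1_uniformly_quasi_greedy x \<longleftrightarrow> (\<exists>C. \<forall>m\<ge>1. \<forall>y\<in>l1_closed_span x. l1norm y = 1 \<longrightarrow>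
     l1norm (\<lambda>t. Max ((\<lambda>n. \<bar>greedy_sum x y n t\<bar>) ` {1..m})) \<le> C)"

definition xcoord :: "nat \<Rightarrow> nat \<Rightarrow> real" where
  "xcoord i j = (if j = i then 1 else if j = 2*i+1 \<or> j = 2*i+2 then -1/2 else 0)"

text \<open>Position k (1-based) of the sequence corresponds to the pair (n, i),
1 \<le> i \<le> n, with k = n(n-1)/2 + i (order by n first, then by i).\<close>
definition blk :: "nat \<Rightarrow> nat \<times> nat" where
  "blk k = (THE p. 1 \<le> snd p \<and> snd p \<le> fst p \<and> k = fst p * (fst p - 1) div 2 + snd p)"

definition Yseq :: "nat \<Rightarrow> nat \<times> nat \<Rightarrow> real" where
  "Yseq k = (\<lambda>(m, j). if m = fst (blk k) then xcoord (snd (blk k)) j else 0)"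

end

theory Submission imports Defs begin
lemma l1norm_eq:
  assumes "finite U" "\<And>t. t \<notin> U \<Longrightarrow> f t = 0"
  shows "l1norm f = (\<Sum>t\<in>U. \<bar>f t\<bar>)"
proof -
  have "l1norm f = infsum (\<lambda>t. \<bar>f t\<bar>) U"
    unfolding l1norm_def by (rule infsum_cong_neutral) (use assms in auto)
  then show ?thesis using assms by simp
qed

lemma l1space_fin:
  assumes "finite U" "\<And>t. t \<notin> U \<Longrightarrow> f t = 0"
  shows "f \<in> l1space"
  unfolding l1space_def
proof
  have "(\<lambda>t. \<bar>f t\<bar>) summable_on U" using assms by simp
  then show "(\<lambda>t. \<bar>f t\<bar>) summable_on UNIV"
    by (rule summable_on_cong_neutral[THEN iffD1, rotated -1]) (use assms in auto)
qed

lemma l1norm_ge: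
  assumes "finite {t. f t \<noteq> 0}" "finite S"
  shows "(\<Sum>t\<in>S. \<bar>f t\<bar>) \<le> l1norm f"
proof -
  have "l1norm f = (\<Sum>t\<in>S \<union> {t. f t \<noteq> 0}. \<bar>f t\<bar>)"
    by (rule l1norm_eq) (use assms in auto)
  moreover have "(\<Sum>t\<in>S. \<bar>f t\<bar>) \<le> (\<Sum>t\<in>S \<union> {t. f t \<noteq> 0}. \<bar>f t\<bar>)"
    by (rule sum_mono2) (use assms in auto)
  ultimately show ?thesis by simp
qed

fun cc :: "nat \<Rightarrow> real" where
  "cc j = (if j \<le> 2 then 1 else cc ((j - 1) div 2) / 2)"

declare cc.simps[simp del]

lemma cc_pos: "cc j > 0"
  by (induction j rule: cc.induct) (subst cc.simps, auto)

lemma cc_le1: "cc j \<le> 1"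
  by (induction j rule: cc.induct) (subst cc.simps, auto)

lemma cc_rec: "3 \<le> j \<Longrightarrow> cc j = cc ((j - 1) div 2) / 2"
  by (subst cc.simps) auto

lemma cc_small: "j \<le> 2 \<Longrightarrow> cc j = 1"
  by (subst cc.simps) auto

lemma cc_upper: "cc j \<le> 4 / (real j + 2)"
proof (induction j rule: cc.induct)
  case (1 j)
  show ?case
  proof (cases "j \<le> 2")
    case True then show ?thesis by (auto simp: cc_small)
  next
    case False
    let ?p = "(j - 1) div 2"
    have "cc j = cc ?p / 2" using False by (simp add: cc_rec)
    also have "\<dots> \<le> 4 / (real ?p + 2) / 2"
      by (rule divide_right_mono) (use 1 False in simp_all)
    also have "\<dots> \<le> 4 / (real j + 2)"
    proof -
      have "j \<le> 2 * ?p + 2" using False by auto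
      then have "real j \<le> real (2 * ?p + 2)" by (simp only: of_nat_le_iff)
      then have "real j + 2 \<le> 2 * (real ?p + 2)" by simp
      then show ?thesis by (simp add: frac_le field_simps)
    qed
    finally show ?thesis .
  qed
qed

lemma cc_lower: "cc j \<ge> 1 / (real j + 1)"
proof (induction j rule: cc.induct)
  case (1 j)
  show ?case
  proof (cases "j \<le> 2")
    case True then show ?thesis by (auto simp: cc_small field_simps)
  next
    case False
    let ?p = "(j - 1) div 2"
    have "1 / (real j + 1) \<le> 1 / (real ?p + 1) / 2"
    proof -
      have "2 * ?p + 1 \<le> j" using False by auto
      then have "real (2 * ?p + 1) \<le> real j" by (simp only: of_nat_le_iff)
      then have "2 * (real ?p + 1) \<le> real j + 1" by simp
      then show ?thesis by (simp add: frac_le field_simps)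
    qed
    also have "\<dots> \<le> cc ?p / 2"
      by (rule divide_right_mono) (use 1 False in simp_all)
    also have "\<dots> = cc j" using False by (simp add: cc_rec)
    finally show ?thesis .
  qed
qed

lemma cc_anti: "1 \<le> i \<Longrightarrow> i \<le> i' \<Longrightarrow> cc i' \<le> cc i"
proof (induction i' arbitrary: i rule: less_induct)
  case (less i')
  show ?case
  proof (cases "i' \<le> 2")
    case True then show ?thesis using less by (simp add: cc_small)
  next
    case False
    show ?thesis
    proof (cases "i \<le> 2")
      case True
      then show ?thesis using False cc_le1[of "(i' - 1) div 2"] by (simp add: cc_small cc_rec)
    next
      case F2: False
      have "cc ((i' - 1) div 2) \<le> cc ((i - 1) div 2)"
        using less F2 False by (intro less.IH) (auto intro: div_le_mono)
      then show ?thesis using False F2 by (simp add: cc_rec)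
    qed
  qed
qed


definition tri :: "nat \<Rightarrow> nat" where "tri n = n * (n - 1) div 2"

lemma tri_Suc: "tri (Suc n) = tri n + n"
proof -
  have "Suc n * n = n * (n - 1) + 2 * n" by (cases n) (auto simp: algebra_simps)
  then show ?thesis unfolding tri_def by simp
qed

lemma tri_mono: "m \<le> n \<Longrightarrow> tri m \<le> tri n"
  unfolding tri_def by (intro div_le_mono mult_le_mono) auto

lemma tri_lt: "i \<le> n \<Longrightarrow> 1 \<le> i' \<Longrightarrow> n < n' \<Longrightarrow> tri n + i < tri n' + i'"
proof -
  assume a: "i \<le> n" "1 \<le> i'" "n < n'"
  have "tri (Suc n) \<le> tri n'" using a by (intro tri_mono) auto
  then show ?thesis using a by (simp add: tri_Suc)
qed

lemma tri_inj:
  assumes "1 \<le> i" "i \<le> n" "1 \<le> i'" "i' \<le> n'" "tri n + i = tri n' + i'"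
  shows "n = n' \<and> i = i'"
proof -
  have "\<not> n < n'" using tri_lt[of i n i' n'] assms by auto
  moreover have "\<not> n' < n" using tri_lt[of i' n' i n] assms by auto
  ultimately show ?thesis using assms by auto
qed

lemma blk_tri: "1 \<le> i \<Longrightarrow> i \<le> n \<Longrightarrow> blk (tri n + i) = (n, i)"
  unfolding blk_def tri_def[symmetric]
proof (rule the_equality)
  fix p :: "nat \<times> nat"
  assume "1 \<le> snd p \<and> snd p \<le> fst p \<and> tri n + i = tri (fst p) + snd p"
  moreover assume "1 \<le> i" "i \<le> n"
  ultimately show "p = (n, i)" using tri_inj[of i n "snd p" "fst p"] by (cases p) auto
qed auto

lemma blk_ex: "1 \<le> k \<Longrightarrow> \<exists>n i. 1 \<le> i \<and> i \<le> n \<and> k = tri n + i"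
proof (induction k)
  case 0 then show ?case by simp
next
  case (Suc k)
  show ?case
  proof (cases "k = 0")
    case True then show ?thesis by (intro exI[of _ 1]) (simp add: tri_def)
  next
    case False
    then obtain n i where ni: "1 \<le> i" "i \<le> n" "k = tri n + i" using Suc by auto
    show ?thesis
    proof (cases "i < n")
      case True then show ?thesis using ni by (intro exI[of _ n] exI[of _ "Suc i"]) auto
    next
      case False then show ?thesis using ni
        by (intro exI[of _ "Suc n"] exI[of _ 1]) (auto simp: tri_Suc)
    qed
  qed
qed

lemma Yseq_tri: "1 \<le> i \<Longrightarrow> i \<le> n \<Longrightarrow> Yseq (tri n + i) (p, j) = (if p = n then xcoord i j else 0)"
  by (simp add: Yseq_def blk_tri)

lemma xcoord_nz: "xcoord i j \<noteq> 0 \<Longrightarrow> j = i \<or> j = 2*i+1 \<or> j = 2*i+2"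
  unfolding xcoord_def by (auto split: if_splits)

lemma Yseq_supp: "finite {t. Yseq k t \<noteq> 0}"
proof (rule finite_subset)
  show "{t. Yseq k t \<noteq> 0} \<subseteq> {fst (blk k)} \<times> {..2 * snd (blk k) + 2}"
    by (auto simp: Yseq_def xcoord_def split: if_splits)
qed auto

definition RR :: "nat \<Rightarrow> nat \<Rightarrow> real" where
  "RR r j = (\<Sum>i\<in>{1..r}. cc i * xcoord i j)"

lemma RR_formula:
  "RR r j = (if 1 \<le> j \<and> j \<le> r then cc j else 0) - (if 3 \<le> j \<and> (j - 1) div 2 \<le> r then cc j else 0)"
proof (induction r)
  case 0 then show ?case by (auto simp: RR_def)
next
  case (Suc r)
  have e: "RR (Suc r) j = RR r j + cc (Suc r) * xcoord (Suc r) j"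
    by (simp add: RR_def)
  show ?case
  proof (cases "j = Suc r")
    case True
    then show ?thesis unfolding e Suc by (auto simp: xcoord_def)
  next
    case F1: False
    show ?thesis
    proof (cases "j = 2 * Suc r + 1 \<or> j = 2 * Suc r + 2")
      case True
      then have p: "(j - 1) div 2 = Suc r" "3 \<le> j" by auto
      have "cc j = cc (Suc r) / 2" using cc_rec[OF p(2)] p(1) by simp
      then show ?thesis unfolding e Suc using True p F1 by (auto simp: xcoord_def)
    next
      case False
      have x: "xcoord (Suc r) j = 0" using F1 False by (auto simp: xcoord_def)
      have "(j - 1) div 2 \<le> Suc r \<longleftrightarrow> (j - 1) div 2 \<le> r" using False by auto
      then show ?thesis unfolding e Suc x using F1 by auto
    qed
  qed
qed

definition aa :: "nat \<Rightarrow> real \<Rightarrow> nat \<Rightarrow> real" where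
  "aa N s k = (if tri N < k \<and> k \<le> tri N + N then s * cc (k - tri N) else 0)"

lemma blocksum:
  assumes "r \<le> N"
  shows "(\<Sum>k\<in>{tri N + 1..tri N + r}. aa N s k * Yseq k (p, j)) = (if p = N then s * RR r j else 0)"
proof -
  have "(\<Sum>k\<in>{tri N + 1..tri N + r}. aa N s k * Yseq k (p, j))
      = (\<Sum>i\<in>{1..r}. aa N s (i + tri N) * Yseq (i + tri N) (p, j))"
    using sum.shift_bounds_cl_nat_ivl[of "\<lambda>k. aa N s k * Yseq k (p, j)" 1 "tri N" r]
    by (simp add: add.commute)
  also have "\<dots> = (\<Sum>i\<in>{1..r}. (if p = N then s * (cc i * xcoord i j) else 0))"
  proof (rule sum.cong)
    fix i assume "i \<in> {1..r}"
    then have "1 \<le> i" "i \<le> N" using assms by auto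
    then show "aa N s (i + tri N) * Yseq (i + tri N) (p, j) = (if p = N then s * (cc i * xcoord i j) else 0)"
      using Yseq_tri[of i N p j] by (simp add: aa_def add.commute)
  qed simp
  also have "\<dots> = (if p = N then s * RR r j else 0)"
    by (simp add: RR_def sum_distrib_left)
  finally show ?thesis .
qed

lemma psum:
  assumes "n \<le> tri N + N"
  shows "(\<Sum>k\<in>{1..n}. aa N s k * Yseq k (p, j)) = (if p = N then s * RR (n - tri N) j else 0)"
proof (cases "n \<le> tri N")
  case True
  have "(\<Sum>k\<in>{1..n}. aa N s k * Yseq k (p, j)) = 0"
    using True by (intro sum.neutral) (auto simp: aa_def)
  then show ?thesis using True by (simp add: RR_def)
next
  case False
  define r where "r = n - tri N"
  have n: "n = tri N + r" "r \<le> N" using False assms by (auto simp: r_def)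
  have "(\<Sum>k\<in>{1..n}. aa N s k * Yseq k (p, j)) = (\<Sum>k\<in>{tri N + 1..tri N + r}. aa N s k * Yseq k (p, j))"
    by (rule sum.mono_neutral_right) (auto simp: n aa_def)
  then show ?thesis using blocksum[OF n(2)] by (simp add: r_def[symmetric])
qed

lemma harm_bound: "harm (K + 1) \<le> 3 + (\<Sum>j\<in>{3..K}. 1 / (real j + 1))"
proof (induction K)
  case 0 then show ?case by (simp add: harm_def)
next
  case (Suc K)
  show ?case
  proof (cases "K \<le> 1")
    case True
    then have "K = 0 \<or> K = 1" by auto
    then show ?thesis by (auto simp: harm_def)
  next
    case False
    have "harm (Suc K + 1) = harm (K + 1) + 1 / (real (Suc K) + 1)"
      by (simp add: harm_Suc field_simps)
    moreover have "(\<Sum>j\<in>{3..Suc K}. 1 / (real j + 1)) = (\<Sum>j\<in>{3..K}. 1 / (real j + 1)) + 1 / (real (Suc K) + 1)"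
      using False by (simp add: sum.cl_ivl_Suc)
    ultimately show ?thesis using Suc by simp
  qed
qed


lemma RR_supp: "RR r j \<noteq> 0 \<Longrightarrow> 1 \<le> j \<and> j \<le> 2 * r + 2"
  unfolding RR_formula by (auto split: if_splits)

lemma RR_par: "3 \<le> j \<Longrightarrow> RR ((j - 1) div 2) j = - cc j"
  unfolding RR_formula by auto

lemma RR_full_bound:
  assumes "2 \<le> N"
  shows "\<bar>RR N j\<bar> \<le> (if j \<le> 2 then 1 else 0) + (if N < j then 4 / (real N + 3) else 0)"
proof -
  consider "j = 0" | "j = 1 \<or> j = 2" | "3 \<le> j" "j \<le> N" | "3 \<le> j" "N < j" by linarith
  then show ?thesis
  proof cases
    case 1 then show ?thesis by (simp add: RR_formula)
  next
    case 2 then show ?thesis using assms by (auto simp: RR_formula cc_small)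
  next
    case 3
    then have "(j - 1) div 2 \<le> N" by auto
    then show ?thesis using 3 by (simp add: RR_formula)
  next
    case 4
    have "\<bar>RR N j\<bar> \<le> cc j" unfolding RR_formula using 4 cc_pos[of j] by auto
    also have "\<dots> \<le> 4 / (real j + 2)" by (rule cc_upper)
    also have "\<dots> \<le> 4 / (real N + 3)" using 4 by (intro divide_left_mono) auto
    finally show ?thesis using 4 by simp
  qed
qed

lemma sum_RR_full: "2 \<le> N \<Longrightarrow> (\<Sum>j\<in>{0..2*N+2}. \<bar>RR N j\<bar>) \<le> 7"
proof -
  assume N: "2 \<le> N"
  have "(\<Sum>j\<in>{0..2*N+2}. \<bar>RR N j\<bar>)
     \<le> (\<Sum>j\<in>{0..2*N+2}. (if j \<le> 2 then 1 else 0) + (if N < j then 4 / (real N + 3) else 0))"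
    by (rule sum_mono) (rule RR_full_bound[OF N])
  also have "\<dots> = (\<Sum>j\<in>{0..2*N+2}. (if j \<le> 2 then 1 else 0)) + (\<Sum>j\<in>{0..2*N+2}. (if N < j then 4 / (real N + 3) else 0))"
    by (rule sum.distrib)
  also have "(\<Sum>j\<in>{0..2*N+2}. (if j \<le> 2 then 1 else 0)) = (\<Sum>j\<in>{j\<in>{0..2*N+2}. j \<le> 2}. (1::real))"
    by (rule sum.inter_filter[symmetric]) simp
  also have "{j\<in>{0..2*N+2}. j \<le> 2} = {0..2}" by auto
  also have "(\<Sum>j\<in>{0..2*N+2}. (if N < j then 4 / (real N + 3) else 0)) = (\<Sum>j\<in>{j\<in>{0..2*N+2}. N < j}. 4 / (real N + 3))"
    by (rule sum.inter_filter[symmetric]) simp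
  also have "{j\<in>{0..2*N+2}. N < j} = {N+1..2*N+2}" by auto
  finally have "(\<Sum>j\<in>{0..2*N+2}. \<bar>RR N j\<bar>) \<le> 3 + real (N + 2) * (4 / (real N + 3))"
    by (simp add: numeral_3_eq_3)
  also have "real (N + 2) * (4 / (real N + 3)) \<le> 4" by (simp add: field_simps)
  finally show ?thesis by simp
qed

lemma lower_gen:
  fixes F :: "nat \<Rightarrow> nat \<times> nat \<Rightarrow> real"
  assumes m: "1 \<le> m"
    and supp: "\<And>n p j. n \<in> {1..m} \<Longrightarrow> F n (p, j) \<noteq> 0 \<Longrightarrow> p = N \<and> j \<le> K"
    and wit: "\<And>j. j \<in> {3..K'} \<Longrightarrow> \<exists>n\<in>{1..m}. w j \<le> \<bar>F n (N, j)\<bar>"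
  shows "(\<Sum>j\<in>{3..K'}. w j) \<le> l1norm (\<lambda>t. Max ((\<lambda>n. \<bar>F n t\<bar>) ` {1..m}))"
proof -
  define G where "G = (\<lambda>t. Max ((\<lambda>n. \<bar>F n t\<bar>) ` {1..m}))"
  have ge: "\<bar>F n t\<bar> \<le> G t" if "n \<in> {1..m}" for n t
    unfolding G_def by (rule Max_ge) (use that in auto)
  have Gnn: "0 \<le> G t" for t using ge[of 1 t] m by force
  have Gs: "{t. G t \<noteq> 0} \<subseteq> {N} \<times> {..K}"
  proof
    fix t assume "t \<in> {t. G t \<noteq> 0}"
    then have "G t \<noteq> 0" by simp
    obtain p j where t: "t = (p, j)" by (cases t)
    have "\<exists>n\<in>{1..m}. F n t \<noteq> 0"
    proof (rule ccontr)
      assume "\<not> ?thesis"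
      then have "(\<lambda>n. \<bar>F n t\<bar>) ` {1..m} = {0}" using m by force
      then show False using \<open>G t \<noteq> 0\<close> unfolding G_def by simp
    qed
    then show "t \<in> {N} \<times> {..K}" using supp t by auto
  qed
  have fin: "finite {t. G t \<noteq> 0}" by (rule finite_subset[OF Gs]) auto
  have "(\<Sum>j\<in>{3..K'}. w j) \<le> (\<Sum>j\<in>{3..K'}. \<bar>G (N, j)\<bar>)"
  proof (rule sum_mono)
    fix j assume "j \<in> {3..K'}"
    then obtain n where "n \<in> {1..m}" "w j \<le> \<bar>F n (N, j)\<bar>" using wit by blast
    then show "w j \<le> \<bar>G (N, j)\<bar>" using ge[of n "(N, j)"] Gnn[of "(N,j)"] by simp
  qed
  also have "\<dots> = (\<Sum>t\<in>Pair N ` {3..K'}. \<bar>G t\<bar>)"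
    by (subst sum.reindex) (auto simp: inj_on_def)
  also have "\<dots> \<le> l1norm G" by (rule l1norm_ge[OF fin]) auto
  finally show ?thesis unfolding G_def .
qed

lemma coeff_zero:
  assumes lim: "(\<lambda>m. l1norm (\<lambda>t. \<Sum>k\<in>{1..m}. e k * Yseq k t)) \<longlonglongrightarrow> 0"
  shows "1 \<le> k \<Longrightarrow> e k = 0"
proof (induction k rule: less_induct)
  case (less k)
  obtain n i where ni: "1 \<le> i" "i \<le> n" "k = tri n + i" using blk_ex[OF less.prems] by blast
  define D where "D = (\<lambda>m t. \<Sum>k\<in>{1..m}. e k * Yseq k t)"
  have Dval: "D m (n, i) = e k" if "k \<le> m" for m
  proof -
    have "D m (n, i) = (\<Sum>k'\<in>{k}. e k' * Yseq k' (n, i))"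
      unfolding D_def
    proof (rule sum.mono_neutral_right)
      show "\<forall>k'\<in>{1..m} - {k}. e k' * Yseq k' (n, i) = 0"
      proof
        fix k' assume k': "k' \<in> {1..m} - {k}"
        show "e k' * Yseq k' (n, i) = 0"
        proof (cases "k' < k")
          case True then show ?thesis using less.IH[of k'] k' by auto
        next
          case False
          then have gt: "k < k'" using k' by auto
          obtain n' i' where ni': "1 \<le> i'" "i' \<le> n'" "k' = tri n' + i'" using blk_ex[of k'] k' by auto
          have "Yseq k' (n, i) = 0"
          proof (cases "n' = n")
            case True
            then have "i < i'" using gt ni ni' by simp
            then have "xcoord i' i = 0" using xcoord_nz[of i' i] by auto
            then show ?thesis using Yseq_tri[OF ni'(1,2)] ni'(3) True by simp
          next
            case False then show ?thesis using Yseq_tri[OF ni'(1,2)] ni'(3) by simp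
          qed
          then show ?thesis by simp
        qed
      qed
    qed (use that less.prems in auto)
    also have "\<dots> = e k" using Yseq_tri[OF ni(1,2), of n i] ni(3) by (simp add: xcoord_def)
    finally show ?thesis .
  qed
  have Dfin: "finite {t. D m t \<noteq> 0}" for m
  proof (rule finite_subset)
    show "{t. D m t \<noteq> 0} \<subseteq> (\<Union>k\<in>{1..m}. {t. Yseq k t \<noteq> 0})"
    proof
      fix t assume "t \<in> {t. D m t \<noteq> 0}"
      then have "(\<Sum>k\<in>{1..m}. e k * Yseq k t) \<noteq> 0" unfolding D_def by simp
      then obtain k' where "k' \<in> {1..m}" "e k' * Yseq k' t \<noteq> 0"
        by (rule sum.not_neutral_contains_not_neutral)
      then show "t \<in> (\<Union>k\<in>{1..m}. {t. Yseq k t \<noteq> 0})" by auto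
    qed
    show "finite (\<Union>k\<in>{1..m}. {t. Yseq k t \<noteq> 0})" using Yseq_supp by auto
  qed
  have bnd: "\<bar>e k\<bar> \<le> l1norm (D m)" if "k \<le> m" for m
    using l1norm_ge[OF Dfin[of m], of "{(n, i)}"] Dval[OF that] by simp
  show ?case
  proof (rule ccontr)
    assume "e k \<noteq> 0"
    then have "0 < \<bar>e k\<bar>" by simp
    from order_tendstoD(2)[OF lim this] obtain M0 where "\<forall>m\<ge>M0. l1norm (D m) < \<bar>e k\<bar>"
      unfolding D_def eventually_sequentially by blast
    then have "l1norm (D (max M0 k)) < \<bar>e k\<bar>" by simp
    with bnd[of "max M0 k"] show False by simp
  qed
qed

lemma big_N: "\<exists>N\<ge>2. B < (\<Sum>j\<in>{3..2*N+2}. cc j)"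
proof -
  define N where "N = max 2 (nat \<lceil>exp (B + 3)\<rceil>)"
  have "exp (B + 3) \<le> real N" unfolding N_def by linarith
  then have "exp (B + 3) < real (2*N+2) + 1" by simp
  then have "B + 3 < ln (real (2*N+2) + 1)"
    by (metis exp_gt_zero exp_less_cancel_iff exp_ln less_trans)
  also have "\<dots> \<le> harm (2*N+2)" by (rule ln_le_harm)
  also have "\<dots> \<le> harm (2*N+2+1)" by (rule harm_mono) simp
  also have "\<dots> \<le> 3 + (\<Sum>j\<in>{3..2*N+2}. 1 / (real j + 1))" by (rule harm_bound)
  also have "(\<Sum>j\<in>{3..2*N+2}. 1 / (real j + 1)) \<le> (\<Sum>j\<in>{3..2*N+2}. cc j)"
    by (rule sum_mono) (rule cc_lower)
  finally have "B < (\<Sum>j\<in>{3..2*N+2}. cc j)" by simp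
  moreover have "2 \<le> N" unfolding N_def by simp
  ultimately show ?thesis by blast
qed


lemma P_supp:
  assumes "n \<le> tri N + N" "(\<Sum>k\<in>{1..n}. aa N s k * Yseq k (p, j)) \<noteq> 0"
  shows "p = N \<and> j \<le> 2 * N + 2"
proof -
  have "p = N" "RR (n - tri N) j \<noteq> 0" using assms psum[OF assms(1)] by (auto split: if_splits)
  then show ?thesis using RR_supp[of "n - tri N" j] assms(1) by auto
qed

lemma P_norm:
  "l1norm (\<lambda>t. \<Sum>k\<in>{1..tri N + N}. aa N s k * Yseq k t) = \<bar>s\<bar> * (\<Sum>j\<in>{0..2*N+2}. \<bar>RR N j\<bar>)"
proof -
  have "l1norm (\<lambda>t. \<Sum>k\<in>{1..tri N + N}. aa N s k * Yseq k t)
      = (\<Sum>t\<in>Pair N ` {0..2*N+2}. \<bar>\<Sum>k\<in>{1..tri N + N}. aa N s k * Yseq k t\<bar>)"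
  proof (rule l1norm_eq)
    fix t :: "nat \<times> nat" assume t: "t \<notin> Pair N ` {0..2*N+2}"
    obtain p j where pj: "t = (p, j)" by (cases t)
    show "(\<Sum>k\<in>{1..tri N + N}. aa N s k * Yseq k t) = 0"
      using P_supp[of "tri N + N" N s p j] t pj by auto
  qed simp
  also have "\<dots> = (\<Sum>j\<in>{0..2*N+2}. \<bar>\<Sum>k\<in>{1..tri N + N}. aa N s k * Yseq k (N, j)\<bar>)"
    by (subst sum.reindex) (auto simp: inj_on_def)
  also have "\<dots> = (\<Sum>j\<in>{0..2*N+2}. \<bar>s * RR N j\<bar>)"
  proof (rule sum.cong)
    fix j show "\<bar>\<Sum>k\<in>{1..tri N + N}. aa N s k * Yseq k (N, j)\<bar> = \<bar>s * RR N j\<bar>"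
      using psum[of "tri N + N" N s N j] by simp
  qed simp
  also have "\<dots> = \<bar>s\<bar> * (\<Sum>j\<in>{0..2*N+2}. \<bar>RR N j\<bar>)"
    unfolding abs_mult sum_distrib_left ..
  finally show ?thesis .
qed

lemma RR_N1: "1 \<le> N \<Longrightarrow> RR N 1 = 1"
  by (simp add: RR_formula cc_small)

lemma sumRR_ge1: "1 \<le> N \<Longrightarrow> 1 \<le> (\<Sum>j\<in>{0..2*N+2}. \<bar>RR N j\<bar>)"
proof -
  assume N: "1 \<le> N"
  have "\<bar>RR N 1\<bar> \<le> (\<Sum>j\<in>{0..2*N+2}. \<bar>RR N j\<bar>)"
    by (rule member_le_sum) auto
  then show ?thesis using RR_N1[OF N] by simp
qed

lemma coeffs_aa:
  "l1_coeffs Yseq (\<lambda>t. \<Sum>k\<in>{1..tri N + N}. aa N s k * Yseq k t) = aa N s"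
proof -
  define M0 where "M0 = tri N + N"
  have tail: "(\<Sum>k\<in>{1..m}. aa N s k * Yseq k t) = (\<Sum>k\<in>{1..M0}. aa N s k * Yseq k t)"
    if "M0 \<le> m" for m t
    by (rule sum.mono_neutral_right) (use that in \<open>auto simp: aa_def M0_def\<close>)
  show ?thesis
    unfolding l1_coeffs_def M0_def[symmetric]
  proof (rule the_equality)
    show "aa N s 0 = 0 \<and> (\<lambda>m. l1norm (\<lambda>t. (\<Sum>k\<in>{1..M0}. aa N s k * Yseq k t)
        - (\<Sum>k\<in>{1..m}. aa N s k * Yseq k t))) \<longlonglongrightarrow> 0"
    proof
      show "aa N s 0 = 0" by (simp add: aa_def)
      show "(\<lambda>m. l1norm (\<lambda>t. (\<Sum>k\<in>{1..M0}. aa N s k * Yseq k t)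
        - (\<Sum>k\<in>{1..m}. aa N s k * Yseq k t))) \<longlonglongrightarrow> 0"
      proof (rule tendsto_eventually)
        have "l1norm (\<lambda>t. (\<Sum>k\<in>{1..M0}. aa N s k * Yseq k t)
          - (\<Sum>k\<in>{1..m}. aa N s k * Yseq k t)) = 0" if "M0 \<le> m" for m
        proof -
          have "(\<lambda>t. (\<Sum>k\<in>{1..M0}. aa N s k * Yseq k t)
            - (\<Sum>k\<in>{1..m}. aa N s k * Yseq k t)) = (\<lambda>t. 0)" using tail[OF that] by simp
          then show ?thesis by (simp add: l1norm_def)
        qed
        then show "\<forall>\<^sub>F m in sequentially. l1norm (\<lambda>t. (\<Sum>k\<in>{1..M0}. aa N s k * Yseq k t)
          - (\<Sum>k\<in>{1..m}. aa N s k * Yseq k t)) = 0"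
          unfolding eventually_sequentially by blast
      qed
    qed
  next
    fix b assume b: "b 0 = 0 \<and> (\<lambda>m. l1norm (\<lambda>t. (\<Sum>k\<in>{1..M0}. aa N s k * Yseq k t)
        - (\<Sum>k\<in>{1..m}. b k * Yseq k t))) \<longlonglongrightarrow> 0"
    define e where "e k = aa N s k - b k" for k
    have "(\<lambda>m. l1norm (\<lambda>t. \<Sum>k\<in>{1..m}. e k * Yseq k t)) \<longlonglongrightarrow> 0"
    proof (rule Lim_transform_eventually[OF b[THEN conjunct2]])
      show "\<forall>\<^sub>F m in sequentially. l1norm (\<lambda>t. (\<Sum>k\<in>{1..M0}. aa N s k * Yseq k t)
        - (\<Sum>k\<in>{1..m}. b k * Yseq k t)) = l1norm (\<lambda>t. \<Sum>k\<in>{1..m}. e k * Yseq k t)"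
        unfolding eventually_sequentially
      proof (intro exI[of _ M0] allI impI)
        fix m assume m: "M0 \<le> m"
        show "l1norm (\<lambda>t. (\<Sum>k\<in>{1..M0}. aa N s k * Yseq k t)
          - (\<Sum>k\<in>{1..m}. b k * Yseq k t)) = l1norm (\<lambda>t. \<Sum>k\<in>{1..m}. e k * Yseq k t)"
          unfolding e_def left_diff_distrib sum_subtractf tail[OF m] ..
      qed
    qed
    then have "e k = 0" if "1 \<le> k" for k using coeff_zero that by blast
    then show "b = aa N s"
      using b by (intro ext) (metis e_def aa_def eq_iff_diff_eq_0 less_one linorder_not_le not_less_zero)
  qed
qed

lemma gp_block:
  assumes s: "0 < s" and i: "1 \<le> i" "i \<le> N"
  shows "greedy_pred (aa N s) (tri N + i) = {tri N + 1..<tri N + i}"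
proof -
  have ak: "\<bar>aa N s (tri N + i)\<bar> = s * cc i" using i s cc_pos[of i] by (simp add: aa_def)
  have pos: "0 < s * cc i" using s cc_pos[of i] by simp
  show ?thesis
  proof (rule set_eqI)
    fix j
    show "j \<in> greedy_pred (aa N s) (tri N + i) \<longleftrightarrow> j \<in> {tri N + 1..<tri N + i}"
    proof
      assume "j \<in> greedy_pred (aa N s) (tri N + i)"
      then have j: "1 \<le> j" "\<bar>aa N s j\<bar> > s * cc i \<or> (\<bar>aa N s j\<bar> = s * cc i \<and> j < tri N + i)"
        unfolding greedy_pred_def ak by auto
      then have "aa N s j \<noteq> 0" using pos by auto
      then have blk: "tri N < j" "j \<le> tri N + N" and aj: "\<bar>aa N s j\<bar> = s * cc (j - tri N)"
        using s cc_pos[of "j - tri N"] by (auto simp: aa_def split: if_splits)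
      show "j \<in> {tri N + 1..<tri N + i}"
      proof (rule ccontr)
        assume "j \<notin> {tri N + 1..<tri N + i}"
        then have "tri N + i \<le> j" using blk by auto
        then have "cc (j - tri N) \<le> cc i" using i by (intro cc_anti) auto
        then have "s * cc (j - tri N) \<le> s * cc i" using s by simp
        then show False using j aj \<open>tri N + i \<le> j\<close> by auto
      qed
    next
      assume j: "j \<in> {tri N + 1..<tri N + i}"
      then have aj: "\<bar>aa N s j\<bar> = s * cc (j - tri N)"
        using s cc_pos[of "j - tri N"] i by (auto simp: aa_def)
      have "cc i \<le> cc (j - tri N)" using j i by (intro cc_anti) auto
      then have "s * cc i \<le> s * cc (j - tri N)" using s by simp
      then show "j \<in> greedy_pred (aa N s) (tri N + i)"
        unfolding greedy_pred_def ak using aj j by auto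
    qed
  qed
qed

lemma gset_sub:
  assumes s: "0 < s" and n: "n \<le> N" and k: "k \<in> greedy_set (aa N s) n"
  shows "k \<in> {tri N + 1..tri N + n} \<or> (aa N s k = 0 \<and> k \<le> n)"
proof -
  have k1: "1 \<le> k" and fin: "finite (greedy_pred (aa N s) k)" and c: "card (greedy_pred (aa N s) k) < n"
    using k unfolding greedy_set_def by auto
  show ?thesis
  proof (cases "tri N < k \<and> k \<le> tri N + N")
    case True
    define i where "i = k - tri N"
    have i: "1 \<le> i" "i \<le> N" "k = tri N + i" using True by (auto simp: i_def)
    have "card (greedy_pred (aa N s) k) = i - 1" using gp_block[OF s i(1,2)] i(3) by simp
    then show ?thesis using c i by auto
  next
    case False
    then have ak: "aa N s k = 0" unfolding aa_def by (rule if_not_P)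
    have "{1..<k} \<subseteq> greedy_pred (aa N s) k"
      unfolding greedy_pred_def ak by auto
    then have "card {1..<k} \<le> card (greedy_pred (aa N s) k)" using fin by (rule card_mono[rotated])
    then show ?thesis using c ak by auto
  qed
qed

lemma gset_sup:
  assumes s: "0 < s" and n: "n \<le> N"
  shows "{tri N + 1..tri N + n} \<subseteq> greedy_set (aa N s) n"
proof
  fix k assume k: "k \<in> {tri N + 1..tri N + n}"
  define i where "i = k - tri N"
  have i: "1 \<le> i" "i \<le> N" "k = tri N + i" "i \<le> n" using k n by (auto simp: i_def)
  show "k \<in> greedy_set (aa N s) n"
    unfolding greedy_set_def using gp_block[OF s i(1,2)] i by auto
qed

lemma greedy_eq:
  assumes s: "0 < s" and n: "n \<le> N"
  shows "(\<Sum>k\<in>greedy_set (aa N s) n. aa N s k * Yseq k t) = (\<Sum>k\<in>{tri N + 1..tri N + n}. aa N s k * Yseq k t)"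
proof (rule sum.mono_neutral_right)
  have "greedy_set (aa N s) n \<subseteq> {tri N + 1..tri N + n} \<union> {..n}" using gset_sub[OF s n] by blast
  then show "finite (greedy_set (aa N s) n)" by (rule finite_subset) auto
  show "{tri N + 1..tri N + n} \<subseteq> greedy_set (aa N s) n" by (rule gset_sup[OF s n])
  show "\<forall>k\<in>greedy_set (aa N s) n - {tri N + 1..tri N + n}. aa N s k * Yseq k t = 0"
  proof
    fix k assume "k \<in> greedy_set (aa N s) n - {tri N + 1..tri N + n}"
    then have "aa N s k = 0" using gset_sub[OF s n, of k] by auto
    then show "aa N s k * Yseq k t = 0" by simp
  qed
qed

theorem proposition4p1:
  shows "\<not> l1_uniformly_quasi_greedy Yseq \<and> \<not> l1_bibasic Yseq"
proof
  show "\<not> l1_uniformly_quasi_greedy Yseq"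
  proof
    assume "l1_uniformly_quasi_greedy Yseq"
    then obtain C where H: "\<forall>m\<ge>1. \<forall>y\<in>l1_closed_span Yseq. l1norm y = 1 \<longrightarrow>
       l1norm (\<lambda>t. Max ((\<lambda>n. \<bar>greedy_sum Yseq y n t\<bar>) ` {1..m})) \<le> C"
      unfolding l1_uniformly_quasi_greedy_def by blast
    obtain N where N: "2 \<le> N" and big: "7 * \<bar>C\<bar> < (\<Sum>j\<in>{3..2*N+2}. cc j)" using big_N by blast
    define lam where "lam = (\<Sum>j\<in>{0..2*N+2}. \<bar>RR N j\<bar>)"
    have lam1: "1 \<le> lam" using sumRR_ge1 N by (simp add: lam_def)
    have lam7: "lam \<le> 7" using sum_RR_full[OF N] by (simp add: lam_def)
    define s where "s = 1 / lam"
    have s: "0 < s" using lam1 by (simp add: s_def)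
    define y where "y = (\<lambda>t. \<Sum>k\<in>{1..tri N + N}. aa N s k * Yseq k t)"
    have ny: "l1norm y = 1" unfolding y_def P_norm lam_def[symmetric] s_def using lam1
      by simp
    have yspan: "y \<in> l1_closed_span Yseq"
      unfolding l1_closed_span_def
    proof (intro CollectI conjI allI impI)
      show "y \<in> l1space"
      proof (rule l1space_fin[of "Pair N ` {0..2*N+2}"])
        fix t :: "nat \<times> nat" assume t: "t \<notin> Pair N ` {0..2*N+2}"
        obtain p j where pj: "t = (p, j)" by (cases t)
        show "y t = 0" using P_supp[of "tri N + N" N s p j] t pj unfolding y_def by auto
      qed simp
      fix \<epsilon> :: real assume e: "0 < \<epsilon>"
      have "y \<in> l1_span Yseq" unfolding l1_span_def y_def by blast
      moreover have "l1norm (\<lambda>t. y t - y t) < \<epsilon>" using e by (simp add: l1norm_def)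
      ultimately show "\<exists>g\<in>l1_span Yseq. l1norm (\<lambda>t. y t - g t) < \<epsilon>" by blast
    qed
    have coef: "l1_coeffs Yseq y = aa N s" unfolding y_def by (rule coeffs_aa)
    have gs: "greedy_sum Yseq y n (p, j) = (if p = N then s * RR n j else 0)" if "n \<le> N" for n p j
      unfolding greedy_sum_def coef greedy_eq[OF s that] blocksum[OF that] ..
    have "(\<Sum>j\<in>{3..2*N+2}. s * cc j) \<le> l1norm (\<lambda>t. Max ((\<lambda>n. \<bar>greedy_sum Yseq y n t\<bar>) ` {1..N}))"
    proof (rule lower_gen[where F = "\<lambda>n. greedy_sum Yseq y n" and m = N and K = "2*N+2"
          and K' = "2*N+2" and w = "\<lambda>j. s * cc j" and N = N])
      show "1 \<le> N" using N by simp
    next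
      fix n p j assume n: "n \<in> {1..N}" and nz: "greedy_sum Yseq y n (p, j) \<noteq> 0"
      then have "p = N" "RR n j \<noteq> 0" using gs[of n p j] by (auto split: if_splits)
      then show "p = N \<and> j \<le> 2*N+2" using RR_supp[of n j] n by auto
    next
      fix j assume j: "j \<in> {3..2*N+2}"
      show "\<exists>n\<in>{1..N}. s * cc j \<le> \<bar>greedy_sum Yseq y n (N, j)\<bar>"
      proof (rule bexI[of _ "(j - 1) div 2"])
        show mem: "(j - 1) div 2 \<in> {1..N}" using j by auto
        then have "greedy_sum Yseq y ((j - 1) div 2) (N, j) = s * (- cc j)"
          using gs[of "(j - 1) div 2" N j] RR_par[of j] j by auto
        then show "s * cc j \<le> \<bar>greedy_sum Yseq y ((j - 1) div 2) (N, j)\<bar>"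
          using s cc_pos[of j] by (simp add: abs_mult)
      qed
    qed
    also have "\<dots> \<le> C" using H N yspan ny by auto
    finally have le: "s * (\<Sum>j\<in>{3..2*N+2}. cc j) \<le> C" unfolding sum_distrib_left .
    have "lam * \<bar>C\<bar> \<le> 7 * \<bar>C\<bar>" using lam7 by (simp add: mult_right_mono)
    then have "lam * \<bar>C\<bar> < (\<Sum>j\<in>{3..2*N+2}. cc j)" using big by linarith
    then have "\<bar>C\<bar> < s * (\<Sum>j\<in>{3..2*N+2}. cc j)" using lam1 by (simp add: s_def field_simps)
    then show False using le by linarith
  qed
next
  show "\<not> l1_bibasic Yseq"
  proof
    assume "l1_bibasic Yseq"
    then obtain M where M: "1 \<le> M" and H: "\<forall>m\<ge>1. \<forall>a::nat \<Rightarrow> real.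
      l1norm (\<lambda>t. Max ((\<lambda>n. \<bar>\<Sum>k\<in>{1..n}. a k * Yseq k t\<bar>) ` {1..m}))
       \<le> M * l1norm (\<lambda>t. \<Sum>k\<in>{1..m}. a k * Yseq k t)"
      unfolding l1_bibasic_def by blast
    obtain N where N: "2 \<le> N" and big: "7 * M < (\<Sum>j\<in>{3..2*N+2}. cc j)" using big_N by blast
    define m where "m = tri N + N"
    have m1: "1 \<le> m" using N by (simp add: m_def)
    have "(\<Sum>j\<in>{3..2*N+2}. cc j) \<le> l1norm (\<lambda>t. Max ((\<lambda>n. \<bar>\<Sum>k\<in>{1..n}. aa N 1 k * Yseq k t\<bar>) ` {1..m}))"
    proof (rule lower_gen[where F = "\<lambda>n t. \<Sum>k\<in>{1..n}. aa N 1 k * Yseq k t" and m = m and K = "2*N+2"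
          and K' = "2*N+2" and w = cc and N = N])
      show "1 \<le> m" by (rule m1)
    next
      fix n p j assume n: "n \<in> {1..m}" and nz: "(\<Sum>k\<in>{1..n}. aa N 1 k * Yseq k (p, j)) \<noteq> 0"
      show "p = N \<and> j \<le> 2*N+2" using P_supp[of n N 1 p j] n nz by (simp add: m_def)
    next
      fix j assume j: "j \<in> {3..2*N+2}"
      show "\<exists>n\<in>{1..m}. cc j \<le> \<bar>\<Sum>k\<in>{1..n}. aa N 1 k * Yseq k (N, j)\<bar>"
      proof (rule bexI[of _ "tri N + (j - 1) div 2"])
        show mem: "tri N + (j - 1) div 2 \<in> {1..m}" using j by (auto simp: m_def)
        have "(\<Sum>k\<in>{1..tri N + (j - 1) div 2}. aa N 1 k * Yseq k (N, j)) = RR ((j - 1) div 2) j"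
          using psum[of "tri N + (j - 1) div 2" N 1 N j] j by auto
        then show "cc j \<le> \<bar>\<Sum>k\<in>{1..tri N + (j - 1) div 2}. aa N 1 k * Yseq k (N, j)\<bar>"
          using RR_par[of j] j cc_pos[of j] by simp
      qed
    qed
    also have "\<dots> \<le> M * l1norm (\<lambda>t. \<Sum>k\<in>{1..m}. aa N 1 k * Yseq k t)" using H m1 by blast
    also have "\<dots> \<le> M * 7"
    proof (rule mult_left_mono)
      show "l1norm (\<lambda>t. \<Sum>k\<in>{1..m}. aa N 1 k * Yseq k t) \<le> 7"
        unfolding m_def P_norm using sum_RR_full[OF N] by simp
    qed (use M in simp)
    finally show False using big by simp
  qed
qed

end
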